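(* Let $k\geq 2$ be an integer. The generating function $\sum_{n\geq 0} h_{n,k}x^n$, where $h_{n,k}$ is the number of Hertzsprung words of length $n$ over $k$, equals \[\left(1-\frac{kx}{1+3x}-\frac{2x^{2}}{(1+3x)^{2}}\cdot\frac{U_{k}\!\left(-\frac{1+x}{2x}\right)-U_{k-1}\!\left(-\frac{1+x}{2x}\right)-1}{U_{k}\!\left(-\frac{1+x}{2x}\right)}\right)^{-1}.\]
   Context: For an integer $k\geq 2$, $[k]=\{1,\ldots,k\}$ and a word over $k$ of length $n$ is an element $w=w_1\cdots w_n\in[k]^n$ (including the empty word for $n=0$). $\mathrm{s}(w)$ is the number of indices $1\leq i\leq n-1$ with $|w_{i+1}-w_i|\leq 1$. A word $w$ is called Hertzsprung if $\mathrm{s}(w)=0$, i.e., any two consecutive letters differ by at least $2$. $U_n$ denotes the Chebyshev polynomial of the second kind: $U_0(x)=1$, $U_1(x)=2x$, $U_{n+1}(x)=2xU_n(x)-U_{n-1}(x)$. *)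

theory Defs
  imports "HOL-Analysis.Analysis"
begin

definition words :: "nat \<Rightarrow> nat \<Rightarrow> nat list set" where
  "words k n = {w. length w = n \<and> set w \<subseteq> {1..k}}"

text \<open>s(w): number of indices i (1 <= i <= n-1) with |w_(i+1) - w_i| <= 1 (0-based here).\<close>
definition s_stat :: "nat list \<Rightarrow> nat" where
  "s_stat w = card {i. i + 1 < length w \<and> \<bar>int (w ! (i+1)) - int (w ! i)\<bar> \<le> 1}"

definition hertzsprung :: "nat list \<Rightarrow> bool" where
  "hertzsprung w \<longleftrightarrow> s_stat w = 0"

definition h :: "nat \<Rightarrow> nat \<Rightarrow> nat" where
  "h n k = card {w \<in> words k n. hertzsprung w}"

fun chebyU :: "nat \<Rightarrow> real \<Rightarrow> real" where
  "chebyU 0 x = 1"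
| "chebyU (Suc 0) x = 2 * x"
| "chebyU (Suc (Suc n)) x = 2 * x * chebyU (Suc n) x - chebyU n x"

end

theory Submission
  imports Defs
begin


lemma hertz_iff: "hertzsprung w \<longleftrightarrow> (\<forall>i. i + 1 < length w \<longrightarrow> \<bar>int (w ! (i+1)) - int (w ! i)\<bar> \<ge> 2)"
proof -
  have fin: "finite {i. i + 1 < length w \<and> \<bar>int (w ! (i+1)) - int (w ! i)\<bar> \<le> 1}"
    by (rule finite_subset[of _ "{..<length w}"]) auto
  show ?thesis unfolding hertzsprung_def s_stat_def using fin by (auto simp: card_eq_0_iff)
qed

lemma hertz_Nil: "hertzsprung []" by (simp add: hertz_iff)
lemma hertz_single: "hertzsprung [a]" by (simp add: hertz_iff)

lemma hertz_Cons2: "hertzsprung (a # b # w) \<longleftrightarrow> \<bar>int b - int a\<bar> \<ge> 2 \<and> hertzsprung (b # w)"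
proof
  assume H: "hertzsprung (a # b # w)"
  have "\<bar>int b - int a\<bar> \<ge> 2" using H[unfolded hertz_iff, rule_format, of 0] by simp
  moreover have "hertzsprung (b # w)" unfolding hertz_iff
  proof (intro allI impI)
    fix i assume "i + 1 < length (b # w)"
    then show "\<bar>int ((b # w) ! (i+1)) - int ((b # w) ! i)\<bar> \<ge> 2"
      using H[unfolded hertz_iff, rule_format, of "Suc i"] by simp
  qed
  ultimately show "\<bar>int b - int a\<bar> \<ge> 2 \<and> hertzsprung (b # w)" by simp
next
  assume A: "\<bar>int b - int a\<bar> \<ge> 2 \<and> hertzsprung (b # w)"
  show "hertzsprung (a # b # w)" unfolding hertz_iff
  proof (intro allI impI)
    fix i assume i: "i + 1 < length (a # b # w)"
    show "\<bar>int ((a # b # w) ! (i+1)) - int ((a # b # w) ! i)\<bar> \<ge> 2"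
    proof (cases i)
      case 0 then show ?thesis using A by simp
    next
      case (Suc j) then show ?thesis using A[THEN conjunct2, unfolded hertz_iff, rule_format, of j] i by simp
    qed
  qed
qed

lemma finite_words: "finite (words k n)"
proof -
  have "words k n = {xs. set xs \<subseteq> {1..k} \<and> length xs = n}" unfolding words_def by auto
  then show ?thesis using finite_lists_length_eq[of "{1..k}" n] by simp
qed

lemma card_words: "card (words k n) = k ^ n"
proof -
  have "words k n = {xs. set xs \<subseteq> {1..k} \<and> length xs = n}" unfolding words_def by auto
  then show ?thesis using card_lists_length_eq[of "{1..k}" n] by simp
qed

lemma h_le: "h n k \<le> k ^ n"
  unfolding h_def using card_mono[OF finite_words, of "{w \<in> words k n. hertzsprung w}" k n] card_words
  by auto

definition g :: "nat \<Rightarrow> nat \<Rightarrow> nat \<Rightarrow> nat" where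
  "g k n j = card {w \<in> words k (Suc n). hertzsprung w \<and> hd w = j}"

lemma h_0: "h 0 k = 1"
proof -
  have "{w \<in> words k 0. hertzsprung w} = {[]}" unfolding words_def using hertz_Nil by auto
  then show ?thesis unfolding h_def by simp
qed

lemma hd_in: "w \<in> words k (Suc n) \<Longrightarrow> hd w \<in> {1..k}"
  by (cases w) (auto simp: words_def)

lemma h_Suc: "h (Suc n) k = (\<Sum>j\<in>{1..k}. g k n j)"
proof -
  have eq: "{w \<in> words k (Suc n). hertzsprung w} = (\<Union>j\<in>{1..k}. {w \<in> words k (Suc n). hertzsprung w \<and> hd w = j})"
    using hd_in by blast
  show ?thesis unfolding h_def g_def eq
    by (rule card_UN_disjoint) (auto intro: finite_subset[OF _ finite_words])
qed

lemma g_le: "g k n j \<le> k ^ Suc n"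
  unfolding g_def using card_mono[OF finite_words, of "{w \<in> words k (Suc n). hertzsprung w \<and> hd w = j}" k "Suc n"] card_words
  by auto

lemma g_out: "j \<notin> {1..k} \<Longrightarrow> g k n j = 0"
proof -
  assume j: "j \<notin> {1..k}"
  have E: "{w \<in> words k (Suc n). hertzsprung w \<and> hd w = j} = {}"
    using hd_in j by blast
  show ?thesis unfolding g_def E by simp
qed

lemma g_0: "j \<in> {1..k} \<Longrightarrow> g k 0 j = 1"
proof -
  assume j: "j \<in> {1..k}"
  have "{w \<in> words k (Suc 0). hertzsprung w \<and> hd w = j} = {[j]}"
  proof safe
    fix w assume "w \<in> words k (Suc 0)" "j = hd w"
    then show "w = [hd w]" unfolding words_def by (cases w) auto
  qed (use j hertz_single in \<open>auto simp: words_def\<close>)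
  then show ?thesis unfolding g_def by simp
qed

lemma g_Suc_far: assumes j: "j \<in> {1..k}"
  shows "g k (Suc n) j = (\<Sum>i\<in>{i\<in>{1..k}. \<bar>int i - int j\<bar> \<ge> 2}. g k n i)"
proof -
  let ?I = "{i\<in>{1..k}. \<bar>int i - int j\<bar> \<ge> 2}"
  let ?A = "\<lambda>i. {w \<in> words k (Suc n). hertzsprung w \<and> hd w = i}"
  have eq: "{w \<in> words k (Suc (Suc n)). hertzsprung w \<and> hd w = j} = Cons j ` (\<Union>i\<in>?I. ?A i)"
  proof (rule set_eqI, rule iffI)
    fix w assume "w \<in> {w \<in> words k (Suc (Suc n)). hertzsprung w \<and> hd w = j}"
    then have w: "w \<in> words k (Suc (Suc n))" "hertzsprung w" "hd w = j" by auto
    obtain a b u where wb: "w = a # b # u" using w(1) unfolding words_def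
      by (auto simp: length_Suc_conv)
    have a: "a = j" using w(3) wb by simp
    have H: "\<bar>int b - int j\<bar> \<ge> 2" "hertzsprung (b # u)" using w(2) wb a hertz_Cons2 by metis+
    have bu: "b # u \<in> words k (Suc n)" using w(1) wb unfolding words_def by auto
    have b: "b \<in> {1..k}" using hd_in[OF bu] by simp
    have "b # u \<in> (\<Union>i\<in>?I. ?A i)" using H bu b by auto
    then show "w \<in> Cons j ` (\<Union>i\<in>?I. ?A i)" using wb a by blast
  next
    fix w assume "w \<in> Cons j ` (\<Union>i\<in>?I. ?A i)"
    then obtain i v where v: "w = j # v" "i \<in> ?I" "v \<in> words k (Suc n)" "hertzsprung v" "hd v = i"
      by blast
    obtain b u where vb: "v = b # u" using v(3) unfolding words_def by (auto simp: length_Suc_conv)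
    have "hertzsprung (j # b # u)" using v vb hertz_Cons2 by (simp add: abs_minus_commute)
    moreover have "j # v \<in> words k (Suc (Suc n))" using v(3) j unfolding words_def by auto
    ultimately show "w \<in> {w \<in> words k (Suc (Suc n)). hertzsprung w \<and> hd w = j}"
      using v vb by simp
  qed
  have "g k (Suc n) j = card (\<Union>i\<in>?I. ?A i)"
    unfolding g_def eq by (rule card_image) simp
  also have "\<dots> = (\<Sum>i\<in>?I. g k n i)"
    unfolding g_def by (rule card_UN_disjoint) (auto intro: finite_subset[OF _ finite_words])
  finally show ?thesis .
qed

lemma g_Suc: assumes j: "j \<in> {1..k}"
  shows "real (g k (Suc n) j) = real (h (Suc n) k) - real (g k n (j-1)) - real (g k n j) - real (g k n (j+1))"
proof -
  let ?f = "\<lambda>i. real (g k n i)"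
  have "real (h (Suc n) k) = (\<Sum>i\<in>{1..k}. ?f i)" by (simp add: h_Suc)
  also have "\<dots> = (\<Sum>i\<in>{i\<in>{1..k}. \<bar>int i - int j\<bar> \<ge> 2}. ?f i) + (\<Sum>i\<in>{i\<in>{1..k}. \<not> \<bar>int i - int j\<bar> \<ge> 2}. ?f i)"
    using sum.Int_Diff[of "{1..k}" ?f "{i. \<bar>int i - int j\<bar> \<ge> 2}"]
    by (simp add: Int_def set_diff_eq conj_commute)
  also have "(\<Sum>i\<in>{i\<in>{1..k}. \<not> \<bar>int i - int j\<bar> \<ge> 2}. ?f i) = (\<Sum>i\<in>{j-1,j,j+1}. ?f i)"
  proof (rule sum.mono_neutral_left)
    show "{i \<in> {1..k}. \<not> 2 \<le> \<bar>int i - int j\<bar>} \<subseteq> {j - 1, j, j + 1}" by auto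
    show "\<forall>i\<in>{j - 1, j, j + 1} - {i \<in> {1..k}. \<not> 2 \<le> \<bar>int i - int j\<bar>}. ?f i = 0"
    proof
      fix i assume "i \<in> {j - 1, j, j + 1} - {i \<in> {1..k}. \<not> 2 \<le> \<bar>int i - int j\<bar>}"
      then have "i \<notin> {1..k}" using j by auto
      then have "g k n i = 0" by (rule g_out)
      then show "?f i = 0" by simp
    qed
  qed simp
  also have "(\<Sum>i\<in>{j-1,j,j+1}. ?f i) = ?f (j-1) + ?f j + ?f (j+1)" using j by (cases j) auto
  finally show ?thesis using g_Suc_far[OF j, of n] by simp
qed


definition Wf :: "real \<Rightarrow> nat \<Rightarrow> real" where
  "Wf y j = (if j = 0 then 0 else chebyU (j - 1) y)"

lemma Wf_0[simp]: "Wf y 0 = 0" and Wf_1[simp]: "Wf y (Suc 0) = 1"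
  by (simp_all add: Wf_def)

lemma Wf_rec: "Wf y (Suc (Suc j)) = 2 * y * Wf y (Suc j) - Wf y j"
  by (cases j) (auto simp: Wf_def)

lemma Wf_grow: assumes "\<bar>y\<bar> \<ge> 1" shows "\<bar>Wf y (Suc n)\<bar> \<ge> \<bar>Wf y n\<bar> + 1"
proof (induction n)
  case 0 then show ?case by simp
next
  case (Suc n)
  have "\<bar>Wf y (Suc (Suc n))\<bar> \<ge> \<bar>2 * y * Wf y (Suc n)\<bar> - \<bar>Wf y n\<bar>"
    unfolding Wf_rec by linarith
  moreover have "\<bar>2 * y * Wf y (Suc n)\<bar> \<ge> 2 * \<bar>Wf y (Suc n)\<bar>"
    using assms by (simp add: abs_mult mult_right_mono)
  ultimately show ?case using Suc.IH by linarith
qed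

lemma Wf_pos: assumes "\<bar>y\<bar> \<ge> 1" shows "\<bar>Wf y n\<bar> \<ge> real n"
proof (induction n)
  case (Suc n) then show ?case using Wf_grow[OF assms, of n] by simp
qed simp

lemma Wf_nz: assumes "\<bar>y\<bar> \<ge> 1" shows "Wf y (Suc n) \<noteq> 0"
  using Wf_pos[OF assms, of "Suc n"] by auto

lemma Wf_sum: "(\<Sum>j=1..n. Wf y j) * (2 * y - 2) = Wf y (Suc n) - Wf y n - 1"
proof (induction n)
  case 0 then show ?case by simp
next
  case (Suc n)
  have "(\<Sum>j=1..Suc n. Wf y j) = (\<Sum>j=1..n. Wf y j) + Wf y (Suc n)" by simp
  then show ?case using Suc.IH Wf_rec[of y n] by (simp add: algebra_simps)
qed

lemma uniq:
  fixes u :: "nat \<Rightarrow> real" and x :: real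
  assumes dom: "\<bar>1 + x\<bar> > 2 * \<bar>x\<bar>" and u0: "u 0 = 0" and uk: "u (Suc k) = 0"
    and eq: "\<And>j. j \<in> {1..k} \<Longrightarrow> x * u (j - 1) + (1 + x) * u j + x * u (j + 1) = 0"
  shows "\<And>j. j \<le> Suc k \<Longrightarrow> u j = 0"
proof -
  define M where "M = Max ((\<lambda>j. \<bar>u j\<bar>) ` {0..Suc k})"
  have fin: "finite ((\<lambda>j. \<bar>u j\<bar>) ` {0..Suc k})" by simp
  have le: "\<bar>u j\<bar> \<le> M" if "j \<le> Suc k" for j
    unfolding M_def using that by (intro Max_ge[OF fin]) auto
  obtain j0 where j0: "j0 \<le> Suc k" "\<bar>u j0\<bar> = M"
    using Max_in[OF fin] unfolding M_def by fastforce
  have M0: "M \<le> 0"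
  proof (cases "j0 \<in> {1..k}")
    case False
    then have "j0 = 0 \<or> j0 = Suc k" using j0 by auto
    then show ?thesis using j0 u0 uk by auto
  next
    case True
    have "(1 + x) * u j0 = - x * (u (j0 - 1) + u (j0 + 1))" using eq[OF True] by (simp add: algebra_simps)
    then have "\<bar>1 + x\<bar> * \<bar>u j0\<bar> = \<bar>x\<bar> * \<bar>u (j0 - 1) + u (j0 + 1)\<bar>"
      by (metis abs_minus_cancel abs_mult mult_minus_left)
    also have "\<dots> \<le> \<bar>x\<bar> * (M + M)"
    proof (intro mult_left_mono)
      have "\<bar>u (j0 - 1)\<bar> \<le> M" "\<bar>u (j0 + 1)\<bar> \<le> M" using le[of "j0 - 1"] le[of "j0 + 1"] True by auto
      then show "\<bar>u (j0 - 1) + u (j0 + 1)\<bar> \<le> M + M" by linarith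
    qed simp
    finally have "\<bar>1 + x\<bar> * M \<le> 2 * \<bar>x\<bar> * M" using j0 by simp
    then have "(\<bar>1 + x\<bar> - 2 * \<bar>x\<bar>) * M \<le> 0" by (simp add: algebra_simps)
    moreover have "\<bar>1 + x\<bar> - 2 * \<bar>x\<bar> > 0" using dom by simp
    ultimately show ?thesis using mult_le_cancel_left_pos[of "\<bar>1 + x\<bar> - 2 * \<bar>x\<bar>" M 0] by simp
  qed
  fix j assume "j \<le> Suc k"
  then show "u j = 0" using le[of j] M0 by simp
qed


lemma inv_helper: "(a::real) * d = 1 \<Longrightarrow> a = 1 / d"
  by (cases "d = 0") (auto simp: field_simps)

lemma key:
  fixes x :: real and k :: nat
  assumes k: "k \<ge> 1" and x0: "x \<noteq> 0" and xs: "\<bar>x\<bar> * (real k + 3) < 1"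
  shows "(\<lambda>n. real (h n k) * x ^ n) sums
       (1 / (1 - real k * x / (1 + 3 * x)
             - 2 * x^2 / (1 + 3 * x)^2 *
               ((chebyU k (- (1 + x) / (2 * x)) - chebyU (k - 1) (- (1 + x) / (2 * x)) - 1)
                / chebyU k (- (1 + x) / (2 * x)))))"
proof -
  have kx: "real k * \<bar>x\<bar> < 1" using xs by (simp add: algebra_simps)
  have "\<bar>x\<bar> * 3 \<le> \<bar>x\<bar> * (real k + 3)" by (intro mult_left_mono) auto
  then have x3: "3 * \<bar>x\<bar> < 1" using xs by linarith
  have p3: "1 + 3 * x > 0" using x3 by linarith
  have dom: "\<bar>1 + x\<bar> > 2 * \<bar>x\<bar>" using x3 by linarith
  define y where "y = - (1 + x) / (2 * x)"
  have ya: "\<bar>y\<bar> = \<bar>1 + x\<bar> / (2 * \<bar>x\<bar>)" unfolding y_def by (simp add: abs_div abs_mult abs_minus_commute add.commute)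
  have y1: "\<bar>y\<bar> \<ge> 1" unfolding ya using dom x0 by (simp add: le_divide_eq)
  have y2: "2 * x * y = - (1 + x)" unfolding y_def using x0 by simp
  define U where "U = Wf y (Suc k)"
  have U0: "U \<noteq> 0" unfolding U_def using Wf_nz[OF y1] .
  have geo: "summable (\<lambda>n. (real k * \<bar>x\<bar>) ^ n)" using kx by (intro summable_geometric) simp
  have sh: "summable (\<lambda>n. real (h n k) * x ^ n)"
  proof (rule summable_comparison_test[OF _ geo])
    show "\<exists>N. \<forall>n\<ge>N. norm (real (h n k) * x ^ n) \<le> (real k * \<bar>x\<bar>) ^ n"
    proof (intro exI[of _ 0] allI impI)
      fix n :: nat
      have "real (h n k) \<le> real k ^ n" using h_le by (metis of_nat_le_iff of_nat_power)
      then have "real (h n k) * \<bar>x\<bar> ^ n \<le> real k ^ n * \<bar>x\<bar> ^ n" by (intro mult_right_mono) auto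
      then show "norm (real (h n k) * x ^ n) \<le> (real k * \<bar>x\<bar>) ^ n"
        by (simp add: abs_mult power_abs power_mult_distrib)
    qed
  qed
  have sg: "summable (\<lambda>n. real (g k n i) * x ^ Suc n)" for i
  proof (rule summable_comparison_test[OF _ summable_ignore_initial_segment[OF geo, of 1]])
    show "\<exists>N. \<forall>n\<ge>N. norm (real (g k n i) * x ^ Suc n) \<le> (real k * \<bar>x\<bar>) ^ (n + 1)"
    proof (intro exI[of _ 0] allI impI)
      fix n :: nat
      have "real (g k n i) \<le> real k ^ Suc n" using g_le by (metis of_nat_le_iff of_nat_power)
      then have "real (g k n i) * \<bar>x\<bar> ^ Suc n \<le> real k ^ Suc n * \<bar>x\<bar> ^ Suc n" by (intro mult_right_mono) auto
      then show "norm (real (g k n i) * x ^ Suc n) \<le> (real k * \<bar>x\<bar>) ^ (n + 1)"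
        by (simp only: Suc_eq_plus1 norm_mult real_norm_def abs_mult power_abs power_mult_distrib abs_of_nat)
    qed
  qed
  define Hs where "Hs = (\<Sum>n. real (h n k) * x ^ n)"
  define Gs where "Gs i = (\<Sum>n. real (g k n i) * x ^ Suc n)" for i
  have HS: "(\<lambda>n. real (h n k) * x ^ n) sums Hs" unfolding Hs_def using sh by (simp add: summable_sums)
  have GS: "(\<lambda>n. real (g k n i) * x ^ Suc n) sums Gs i" for i unfolding Gs_def using sg by (simp add: summable_sums)
  have HS1: "(\<lambda>n. real (h (Suc n) k) * x ^ Suc n) sums (Hs - 1)"
    using HS sums_Suc_iff[of "\<lambda>n. real (h n k) * x ^ n" "Hs - 1"] by (simp add: h_0)
  have "(\<lambda>n. real (h (Suc n) k) * x ^ Suc n) = (\<lambda>n. \<Sum>j\<in>{1..k}. real (g k n j) * x ^ Suc n)"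
    by (simp add: h_Suc sum_distrib_right)
  then have "(\<lambda>n. real (h (Suc n) k) * x ^ Suc n) sums (\<Sum>j\<in>{1..k}. Gs j)"
    using sums_sum[of "{1..k}" "\<lambda>j n. real (g k n j) * x ^ Suc n" Gs] GS by simp
  then have "Hs - 1 = (\<Sum>j\<in>{1..k}. Gs j)" by (rule sums_unique2[OF HS1])
  then have A: "Hs = 1 + (\<Sum>j\<in>{1..k}. Gs j)" by simp
  have Gout: "Gs i = 0" if "i \<notin> {1..k}" for i
    using GS[of i] g_out[OF that] sums_unique2[OF _ sums_zero] by simp
  have B: "Gs j + x * (Gs (j-1) + Gs j + Gs (j+1)) = x * Hs" if j: "j \<in> {1..k}" for j
  proof -
    define S where "S = x * (Hs - 1) - x * Gs (j-1) - x * Gs j - x * Gs (j+1)"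
    have s1: "(\<lambda>n. x * (real (h (Suc n) k) * x ^ Suc n) - x * (real (g k n (j-1)) * x ^ Suc n)
            - x * (real (g k n j) * x ^ Suc n) - x * (real (g k n (j+1)) * x ^ Suc n)) sums S"
      unfolding S_def by (intro sums_diff sums_mult HS1 GS)
    have e: "(\<lambda>n. x * (real (h (Suc n) k) * x ^ Suc n) - x * (real (g k n (j-1)) * x ^ Suc n)
            - x * (real (g k n j) * x ^ Suc n) - x * (real (g k n (j+1)) * x ^ Suc n))
          = (\<lambda>n. real (g k (Suc n) j) * x ^ Suc (Suc n))"
    proof (rule ext)
      fix n
      show "x * (real (h (Suc n) k) * x ^ Suc n) - x * (real (g k n (j-1)) * x ^ Suc n)
            - x * (real (g k n j) * x ^ Suc n) - x * (real (g k n (j+1)) * x ^ Suc n)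
          = real (g k (Suc n) j) * x ^ Suc (Suc n)"
        unfolding g_Suc[OF j] power_Suc by algebra
    qed
    have s2: "(\<lambda>n. real (g k (Suc n) j) * x ^ Suc (Suc n)) sums S" using s1 unfolding e .
    have "(\<lambda>n. real (g k n j) * x ^ Suc n) sums (S + real (g k 0 j) * x ^ Suc 0)"
      using iffD1[OF sums_Suc_iff[of "\<lambda>n. real (g k n j) * x ^ Suc n" S] s2] .
    then have "(\<lambda>n. real (g k n j) * x ^ Suc n) sums (S + x)" using g_0[OF j] by simp
    then have "Gs j = S + x" using sums_unique2[OF GS] by blast
    then show ?thesis unfolding S_def by (simp add: algebra_simps)
  qed
  define c where "c = 1 / (1 + 3 * x)"
  define v where "v j = c * (1 - (Wf y j + Wf y (Suc k - j)) / U)" for j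
  have v0: "v 0 = 0" "v (Suc k) = 0" unfolding v_def U_def using U0[unfolded U_def] by simp_all
  have veq: "x * v (j - 1) + (1 + x) * v j + x * v (j + 1) = 1" if j: "j \<in> {1..k}" for j
  proof -
    obtain m where m: "j = Suc m" using j by (cases j) auto
    obtain l where l: "Suc k - j = Suc l" "Suc k - (j - 1) = Suc (Suc l)" "Suc k - (j + 1) = l"
      using j by (intro that[of "k - j"]) auto
    have r1: "Wf y (j + 1) = 2 * y * Wf y j - Wf y (j - 1)" using Wf_rec[of y m] m by simp
    have r2: "Wf y (Suc k - (j - 1)) = 2 * y * Wf y (Suc k - j) - Wf y (Suc k - (j + 1))"
      using Wf_rec[of y l] l by simp
    have "x * v (j - 1) + (1 + x) * v j + x * v (j + 1)
       = c * (1 + 3 * x) - c / U * ((2 * x * y + (1 + x)) * (Wf y j + Wf y (Suc k - j)))"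
      unfolding v_def r1 r2 divide_inverse by algebra
    also have "\<dots> = 1" using y2 p3 unfolding c_def by simp
    finally show ?thesis .
  qed
  define u where "u j = Gs j - x * Hs * v j" for j
  have u0: "u j = 0" if "j \<le> Suc k" for j
  proof (rule uniq[OF dom, of u k])
    show "u 0 = 0" "u (Suc k) = 0" unfolding u_def using v0 Gout by auto
    show "x * u (j - 1) + (1 + x) * u j + x * u (j + 1) = 0" if "j \<in> {1..k}" for j
      using B[OF that] veq[OF that] unfolding u_def by algebra
  qed (use that in auto)
  have Gv: "Gs j = x * Hs * v j" if "j \<in> {1..k}" for j using u0[of j] that unfolding u_def by simp
  have SG: "(\<Sum>j\<in>{1..k}. Gs j) = (\<Sum>j\<in>{1..k}. x * Hs * v j)" by (rule sum.cong) (simp_all add: Gv)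
  have "Hs = 1 + (\<Sum>j\<in>{1..k}. x * Hs * v j)" by (rule trans[OF A]) (simp only: SG)
  then have Hs1: "Hs * (1 - x * (\<Sum>j\<in>{1..k}. v j)) = 1" by (simp add: sum_distrib_left algebra_simps)
  have S1: "(\<Sum>j=1..k. Wf y (Suc k - j)) = (\<Sum>j=1..k. Wf y j)"
    using sum.atLeastAtMost_rev[of "\<lambda>j. Wf y (Suc k - j)" 1 k] by simp
  have S2: "(\<Sum>j=1..k. Wf y j) = - x * (U - chebyU (k - 1) y - 1) / (1 + 3 * x)"
  proof -
    have e: "2 * y - 2 = - (1 + 3 * x) / x" unfolding y_def using x0 by (simp add: field_simps)
    have "(\<Sum>j=1..k. Wf y j) * (- (1 + 3 * x) / x) = U - chebyU (k - 1) y - 1"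
      using Wf_sum[of y k] k unfolding e U_def by (simp add: Wf_def)
    then show ?thesis using x0 p3 by (simp add: field_simps)
  qed
  have vj: "v j = c - c / U * Wf y j - c / U * Wf y (Suc k - j)" for j
    unfolding v_def divide_inverse by algebra
  have "(\<Sum>j\<in>{1..k}. v j) = (\<Sum>j\<in>{1..k}. c) - c / U * (\<Sum>j\<in>{1..k}. Wf y j) - c / U * (\<Sum>j\<in>{1..k}. Wf y (Suc k - j))"
    unfolding vj by (simp add: sum_subtractf sum_distrib_left)
  then have "(\<Sum>j\<in>{1..k}. v j) = c * real k - c / U * 2 * (\<Sum>j=1..k. Wf y j)"
    using S1 by simp
  then have xs: "x * (\<Sum>j\<in>{1..k}. v j) = real k * x / (1 + 3 * x) + 2 * x^2 / (1 + 3 * x)^2 *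
               ((U - chebyU (k - 1) y - 1) / U)"
  proof -
    have ip: "inverse ((1 + 3 * x)^2) = (inverse (1 + 3 * x))^2" by (simp add: power_inverse)
    show ?thesis using \<open>(\<Sum>j\<in>{1..k}. v j) = c * real k - c / U * 2 * (\<Sum>j=1..k. Wf y j)\<close> ip
      unfolding S2 c_def divide_inverse by algebra
  qed
  have Uc: "U = chebyU k y" unfolding U_def Wf_def by simp
  have "Hs = 1 / (1 - real k * x / (1 + 3 * x) - 2 * x^2 / (1 + 3 * x)^2 *
               ((chebyU k y - chebyU (k - 1) y - 1) / chebyU k y))"
  proof -
    have "Hs * (1 - real k * x / (1 + 3 * x) - 2 * x^2 / (1 + 3 * x)^2 *
               ((U - chebyU (k - 1) y - 1) / U)) = 1"
      using Hs1 unfolding xs diff_diff_eq .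
    then show ?thesis unfolding Uc by (rule inv_helper)
  qed
  then show ?thesis using HS unfolding y_def by simp
qed

theorem mainTheorem3:
  fixes k :: nat
  assumes "k \<ge> 2"
  shows "\<forall>\<^sub>F x in at (0::real).
     (\<lambda>n. real (h n k) * x ^ n) sums
       (1 / (1 - real k * x / (1 + 3 * x)
             - 2 * x^2 / (1 + 3 * x)^2 *
               ((chebyU k (- (1 + x) / (2 * x)) - chebyU (k - 1) (- (1 + x) / (2 * x)) - 1)
                / chebyU k (- (1 + x) / (2 * x)))))"
  unfolding eventually_at
proof (intro exI[of _ "1 / (real k + 3)"] conjI ballI impI)
  show "0 < 1 / (real k + 3)" by simp
  fix x :: real assume "x \<in> UNIV" and a: "x \<noteq> 0 \<and> dist x 0 < 1 / (real k + 3)"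
  then have "\<bar>x\<bar> * (real k + 3) < 1" by (simp add: less_divide_eq)
  then show "(\<lambda>n. real (h n k) * x ^ n) sums
       (1 / (1 - real k * x / (1 + 3 * x)
             - 2 * x^2 / (1 + 3 * x)^2 *
               ((chebyU k (- (1 + x) / (2 * x)) - chebyU (k - 1) (- (1 + x) / (2 * x)) - 1)
                / chebyU k (- (1 + x) / (2 * x)))))"
    using key[of k x] assms a by simp
qed

end
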